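(* Let $\beta>0$, $\lambda_1,\dots,\lambda_d\in\mathbb R$, and let $p=(p_1,\dots,p_d)$, with $p_k\ge0$ and $\sum_kp_k=1$, solve \[ \dot p_k=2p_k\tanh(\beta M)(\lambda_k-M),\qquad M=\sum_{l=1}^d\lambda_lp_l. \] Let $I_0:=\{k:p_k(0)>0\}$, $\lambda_+:=\max_{k\in I_0}\lambda_k$, $\lambda_-:=\min_{k\in I_0}\lambda_k$, $I_\pm:=\{k\in I_0:\lambda_k=\lambda_\pm\}$. Then: (1) If $M(0)>0$, then $p_k(t)\to0$ for $k\notin I_+$, $p_k(t)\to p_k(0)/\sum_{j\in I_+}p_j(0)$ for $k\in I_+$, and $M(t)\to\lambda_+$. (2) If $M(0)<0$, then $p_k(t)\to0$ for $k\notin I_-$, $p_k(t)\to p_k(0)/\sum_{j\in I_-}p_j(0)$ for $k\in I_-$, and $M(t)\to\lambda_-$. (3) If $M(0)=0$, then $p_k(t)\equiv p_k(0)$ for all $t\ge0$ and $k\in[d]$.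
   Context: This is the reduced dynamics on the balanced bipolar manifold of the symmetric self-attention system with symmetric interaction matrix having eigenvalues $\lambda_k$; limits are as $t\to\infty$. *)

theory Defs
  imports "HOL-Analysis.Analysis"
begin

text \<open>Indices are 0..d-1 (the paper's 1..d shifted). The state is p :: real => nat => real,
  p t k being the k-th coordinate at time t.\<close>

definition Mval :: "nat \<Rightarrow> (nat \<Rightarrow> real) \<Rightarrow> (nat \<Rightarrow> real) \<Rightarrow> real" where
  "Mval d lam q = (\<Sum>l<d. lam l * q l)"

definition is_solution :: "nat \<Rightarrow> real \<Rightarrow> (nat \<Rightarrow> real) \<Rightarrow> (real \<Rightarrow> nat \<Rightarrow> real) \<Rightarrow> bool" where
  "is_solution d \<beta> lam p \<longleftrightarrow>
     (\<forall>t\<ge>0. (\<forall>k<d. p t k \<ge> 0) \<and> (\<Sum>k<d. p t k) = 1) \<and>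
     (\<forall>t\<ge>0. \<forall>k<d.
        ((\<lambda>s. p s k) has_real_derivative
           (2 * p t k * tanh (\<beta> * Mval d lam (p t)) * (lam k - Mval d lam (p t))))
        (at t within {0..}))"

end

theory Submission
  imports Defs "HOL-Real_Asymp.Real_Asymp"
begin


lemma cont_from_deriv:
  fixes f :: "real \<Rightarrow> real"
  assumes D: "\<And>t. t \<ge> 0 \<Longrightarrow> (f has_real_derivative f' t) (at t within {0..})"
  shows "continuous_on {0..b} f"
proof -
  have "continuous (at x within {0..}) f" if "x \<in> {0..b}" for x
    using D[of x] that DERIV_continuous by auto
  then have "continuous (at x within {0..b}) f" if "x \<in> {0..b}" for x
    using that continuous_within_subset[of x "{0..}" f "{0..b}"] by auto
  then show ?thesis using continuous_on_eq_continuous_within by blast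
qed

lemma nonpos_deriv_dec:
  fixes f f' :: "real \<Rightarrow> real"
  assumes D: "\<And>t. t \<ge> 0 \<Longrightarrow> (f has_real_derivative f' t) (at t within {0..})"
    and N: "\<And>t. t \<ge> 0 \<Longrightarrow> f' t \<le> 0" and t: "0 \<le> t"
  shows "f t \<le> f 0"
proof (rule DERIV_nonpos_imp_decreasing_open[OF t])
  fix x :: real assume x: "0 < x" "x < t"
  then have "at x within {0..} = at x" by (intro at_within_interior) simp
  then show "\<exists>y. DERIV f x :> y \<and> y \<le> 0" using D[of x] N[of x] x by auto
next
  show "continuous_on {0..t} f" using cont_from_deriv[OF D] .
qed

lemma gronwall_up:
  fixes u u' :: "real \<Rightarrow> real"
  assumes D: "\<And>t. t \<ge> 0 \<Longrightarrow> (u has_real_derivative u' t) (at t within {0..})"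
    and B: "\<And>t. t \<ge> 0 \<Longrightarrow> u' t \<le> K * u t" and t: "0 \<le> t"
  shows "u t \<le> u 0 * exp (K * t)"
proof -
  define v where "v = (\<lambda>s. u s * exp (- K * s))"
  have "v t \<le> v 0"
  proof (rule nonpos_deriv_dec[where f'="\<lambda>s. u' s * exp (- K * s) - u s * K * exp (- K * s)"])
    fix s :: real assume s: "0 \<le> s"
    show "(v has_real_derivative (u' s * exp (- K * s) - u s * K * exp (- K * s))) (at s within {0..})"
      using D[OF s] unfolding v_def by (auto intro!: derivative_eq_intros)
    have "u' s * exp (- K * s) \<le> K * u s * exp (- K * s)" using B[OF s] by simp
    then show "u' s * exp (- K * s) - u s * K * exp (- K * s) \<le> 0" by (simp add: algebra_simps)
  qed (use t in auto)
  then have "u t * exp (- K * t) \<le> u 0" unfolding v_def by simp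
  then have "u t * exp (- K * t) * exp (K * t) \<le> u 0 * exp (K * t)" by simp
  then show ?thesis by (simp add: mult.assoc flip: exp_add)
qed

lemma tanh_le_self: "x \<ge> 0 \<Longrightarrow> tanh x \<le> (x::real)"
proof -
  assume x: "x \<ge> 0"
  have "(\<lambda>y. y - tanh y) 0 \<le> (\<lambda>y. y - tanh y) x"
  proof (rule DERIV_nonneg_imp_nondecreasing[OF x])
    fix y :: real
    have "((\<lambda>y. y - tanh y) has_real_derivative 1 - (1 - tanh y ^ 2)) (at y)"
      by (auto intro!: derivative_eq_intros simp: cosh_real_pos[THEN less_imp_neq, symmetric])
    then show "\<exists>d. ((\<lambda>y. y - tanh y) has_real_derivative d) (at y) \<and> d \<ge> 0" by force
  qed
  then show ?thesis by simp
qed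

lemma abs_tanh_le: "\<bar>tanh x\<bar> \<le> \<bar>x::real\<bar>"
proof (cases "x \<ge> 0")
  case True then show ?thesis using tanh_le_self[of x] by simp
next
  case False then show ?thesis using tanh_le_self[of "-x"] by simp
qed

lemma tanh_abs_le1: "\<bar>tanh (x::real)\<bar> \<le> 1"
  using tanh_real_lt_1[of x] tanh_real_gt_neg1[of x] by auto

lemma exp_neg_lim: "(a::real) < 0 \<Longrightarrow> ((\<lambda>t. c * exp (a * t)) \<longlongrightarrow> 0) at_top"
  by real_asymp


lemma sol_nonneg: "is_solution d \<beta> lam p \<Longrightarrow> t \<ge> 0 \<Longrightarrow> k < d \<Longrightarrow> p t k \<ge> 0"
  unfolding is_solution_def by auto

lemma sol_sum: "is_solution d \<beta> lam p \<Longrightarrow> t \<ge> 0 \<Longrightarrow> (\<Sum>k<d. p t k) = 1"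
  unfolding is_solution_def by auto

lemma sol_le1: "is_solution d \<beta> lam p \<Longrightarrow> t \<ge> 0 \<Longrightarrow> k < d \<Longrightarrow> p t k \<le> 1"
proof -
  assume s: "is_solution d \<beta> lam p" and t: "t \<ge> 0" and k: "k < d"
  have "p t k \<le> (\<Sum>k<d. p t k)"
    by (rule member_le_sum) (use k sol_nonneg[OF s t] in auto)
  then show ?thesis using sol_sum[OF s t] by simp
qed

lemma sol_deriv: "is_solution d \<beta> lam p \<Longrightarrow> t \<ge> 0 \<Longrightarrow> k < d \<Longrightarrow>
   ((\<lambda>s. p s k) has_real_derivative
           (2 * p t k * tanh (\<beta> * Mval d lam (p t)) * (lam k - Mval d lam (p t))))
        (at t within {0..})"
  unfolding is_solution_def by auto

lemma M_bound:
  assumes s: "is_solution d \<beta> lam p" and t: "t \<ge> 0"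
  shows "\<bar>Mval d lam (p t)\<bar> \<le> (\<Sum>l<d. \<bar>lam l\<bar>)"
proof -
  have "\<bar>Mval d lam (p t)\<bar> \<le> (\<Sum>l<d. \<bar>lam l * p t l\<bar>)"
    unfolding Mval_def by (rule sum_abs)
  also have "\<dots> \<le> (\<Sum>l<d. \<bar>lam l\<bar>)"
  proof (rule sum_mono)
    fix l assume "l \<in> {..<d}"
    then have "0 \<le> p t l" "p t l \<le> 1" using sol_nonneg[OF s t] sol_le1[OF s t] by auto
    then show "\<bar>lam l * p t l\<bar> \<le> \<bar>lam l\<bar>"
      by (simp add: abs_mult mult_left_le)
  qed
  finally show ?thesis .
qed

lemma lam_bound: "k < (d::nat) \<Longrightarrow> \<bar>(lam k::real)\<bar> \<le> (\<Sum>l<d. \<bar>lam l\<bar>)"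
  using member_le_sum[of k "{..<d}" "\<lambda>l. \<bar>lam l\<bar>"] by auto

lemma M_deriv:
  assumes s: "is_solution d \<beta> lam p" and t: "t \<ge> 0"
  shows "((\<lambda>s. Mval d lam (p s)) has_real_derivative
     (2 * tanh (\<beta> * Mval d lam (p t)) * (\<Sum>l<d. p t l * (lam l - Mval d lam (p t))^2)))
     (at t within {0..})"
proof -
  let ?M = "Mval d lam (p t)"
  let ?g = "tanh (\<beta> * ?M)"
  have "((\<lambda>s. \<Sum>l<d. lam l * p s l) has_real_derivative
     (\<Sum>l<d. lam l * (2 * p t l * ?g * (lam l - ?M)))) (at t within {0..})"
    by (rule DERIV_sum, rule DERIV_cmult, rule sol_deriv[OF s t]) auto
  moreover have "(\<Sum>l<d. lam l * (2 * p t l * ?g * (lam l - ?M))) =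
      2 * ?g * (\<Sum>l<d. p t l * (lam l - ?M)^2)"
  proof -
    have "(\<Sum>l<d. lam l * (2 * p t l * ?g * (lam l - ?M))) =
        2 * ?g * (\<Sum>l<d. p t l * (lam l - ?M)^2) + 2 * ?g * ?M * (\<Sum>l<d. lam l * p t l - ?M * p t l)"
      by (simp add: sum_distrib_left algebra_simps power2_eq_square flip: sum.distrib)
    moreover have "(\<Sum>l<d. lam l * p t l - ?M * p t l) = 0"
      by (simp add: sum_subtractf Mval_def sum_distrib_left[symmetric] sol_sum[OF s t])
    ultimately show ?thesis by simp
  qed
  ultimately show ?thesis unfolding Mval_def by simp
qed

lemma neg_solution:
  assumes s: "is_solution d \<beta> lam p"
  shows "is_solution d \<beta> (\<lambda>k. - lam k) p"
proof -
  have M: "Mval d (\<lambda>k. - lam k) q = - Mval d lam q" for q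
    unfolding Mval_def by (simp add: sum_negf)
  show ?thesis using s unfolding is_solution_def M by (simp add: algebra_simps)
qed

lemma Max_neg: "finite A \<Longrightarrow> A \<noteq> {} \<Longrightarrow> Max ((\<lambda>x. - f x) ` A) = - Min (f ` (A::'a set)) " for f :: "'a \<Rightarrow> real"
proof -
  assume A: "finite A" "A \<noteq> {}"
  have "Min (f ` A) \<in> f ` A" using A by (intro Min_in) auto
  then obtain a where a: "a \<in> A" "f a = Min (f ` A)" by (auto simp: image_iff)
  show ?thesis
  proof (rule Max_eqI)
    show "finite ((\<lambda>x. - f x) ` A)" using A by simp
    show "y \<le> - Min (f ` A)" if "y \<in> (\<lambda>x. - f x) ` A" for y
      using that A Min_le[of "f ` A"] by auto
    show "- Min (f ` A) \<in> (\<lambda>x. - f x) ` A" using a by force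
  qed
qed


lemma V_bounds:
  assumes s: "is_solution d \<beta> lam p" and t: "t \<ge> 0"
  shows "0 \<le> (\<Sum>l<d. p t l * (lam l - Mval d lam (p t))^2)"
    and "(\<Sum>l<d. p t l * (lam l - Mval d lam (p t))^2) \<le> 4 * (\<Sum>l<d. \<bar>lam l\<bar>)^2"
proof -
  let ?L = "\<Sum>l<d. \<bar>lam l\<bar>"
  show "0 \<le> (\<Sum>l<d. p t l * (lam l - Mval d lam (p t))^2)"
    using sol_nonneg[OF s t] by (intro sum_nonneg) auto
  have "(\<Sum>l<d. p t l * (lam l - Mval d lam (p t))^2) \<le> (\<Sum>l<d. p t l * (4 * ?L^2))"
  proof (rule sum_mono)
    fix l assume l: "l \<in> {..<d}"
    have "\<bar>lam l - Mval d lam (p t)\<bar> \<le> 2 * ?L"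
      using lam_bound[of l d lam] M_bound[OF s t] l by auto
    then have "(lam l - Mval d lam (p t))^2 \<le> (2 * ?L)^2"
      by (metis abs_ge_zero order_trans power2_abs power_mono)
    then show "p t l * (lam l - Mval d lam (p t))^2 \<le> p t l * (4 * ?L^2)"
      using sol_nonneg[OF s t] l by (intro mult_left_mono) (auto simp: power_mult_distrib)
  qed
  also have "\<dots> = 4 * ?L^2" using sol_sum[OF s t] by (simp add: sum_distrib_right[symmetric])
  finally show "(\<Sum>l<d. p t l * (lam l - Mval d lam (p t))^2) \<le> 4 * ?L^2" .
qed

lemma const_from_zero_deriv:
  fixes f :: "real \<Rightarrow> real"
  assumes D: "\<And>t. t \<ge> 0 \<Longrightarrow> (f has_real_derivative 0) (at t within {0..})" and t: "t \<ge> 0"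
  shows "f t = f 0"
proof -
  have "f t \<le> f 0" by (rule nonpos_deriv_dec[OF D]) (use t in auto)
  moreover have "(\<lambda>s. - f s) t \<le> (\<lambda>s. - f s) 0"
    by (rule nonpos_deriv_dec[where f'="\<lambda>_. 0"]) (use D t in \<open>auto intro!: derivative_eq_intros\<close>)
  ultimately show ?thesis by simp
qed

lemma case3:
  assumes b: "\<beta> > 0" and s: "is_solution d \<beta> lam p" and M0: "Mval d lam (p 0) = 0"
  shows "\<forall>t\<ge>0. \<forall>k<d. p t k = p 0 k"
proof -
  let ?L = "\<Sum>l<d. \<bar>lam l\<bar>"
  define M where "M t = Mval d lam (p t)" for t
  define V where "V t = (\<Sum>l<d. p t l * (lam l - M t)^2)" for t
  have Mz: "M t = 0" if t: "t \<ge> 0" for t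
  proof -
    have "(\<lambda>s. (M s)^2) t \<le> (\<lambda>s. (M s)^2) 0 * exp ((16 * \<beta> * ?L^2) * t)"
    proof (rule gronwall_up[where u'="\<lambda>t. 2 * M t * (2 * tanh (\<beta> * M t) * V t)"])
      fix t :: real assume t: "t \<ge> 0"
      show "((\<lambda>s. (M s)^2) has_real_derivative 2 * M t * (2 * tanh (\<beta> * M t) * V t)) (at t within {0..})"
        using M_deriv[OF s t] unfolding M_def V_def by (auto intro!: derivative_eq_intros)
      have V0: "0 \<le> V t" and V1: "V t \<le> 4 * ?L^2" using V_bounds[OF s t] unfolding V_def M_def by auto
      have "M t * tanh (\<beta> * M t) \<le> \<bar>M t\<bar> * \<bar>tanh (\<beta> * M t)\<bar>"
        by (metis abs_ge_self abs_mult)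
      also have "\<dots> \<le> \<bar>M t\<bar> * (\<beta> * \<bar>M t\<bar>)"
        using abs_tanh_le[of "\<beta> * M t"] b by (intro mult_left_mono) (auto simp: abs_mult)
      also have "\<dots> = \<beta> * (M t)^2" by (simp add: power2_eq_square abs_mult_self_eq)
      finally have T: "M t * tanh (\<beta> * M t) \<le> \<beta> * (M t)^2" .
      have "2 * M t * (2 * tanh (\<beta> * M t) * V t) = 4 * (M t * tanh (\<beta> * M t)) * V t" by simp
      also have "\<dots> \<le> 4 * (\<beta> * (M t)^2) * V t"
        using T V0 by (intro mult_right_mono) auto
      also have "\<dots> \<le> 4 * (\<beta> * (M t)^2) * (4 * ?L^2)"
        using V1 b by (intro mult_left_mono) auto
      finally show "2 * M t * (2 * tanh (\<beta> * M t) * V t) \<le> (16 * \<beta> * ?L^2) * (M t)^2"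
        by (simp add: algebra_simps)
    qed (use t in auto)
    then have "(M t)^2 \<le> 0" using M0 unfolding M_def by simp
    then show ?thesis by simp
  qed
  show ?thesis
  proof (intro allI impI)
    fix t :: real and k assume t: "t \<ge> 0" and k: "k < d"
    show "p t k = p 0 k"
    proof (rule const_from_zero_deriv[OF _ t])
      fix s :: real assume "s \<ge> 0"
      then show "((\<lambda>s. p s k) has_real_derivative 0) (at s within {0..})"
        using sol_deriv[OF s _ k, of s] Mz[of s] unfolding M_def by simp
    qed
  qed
qed


lemma rate_bound:
  assumes s: "is_solution d \<beta> lam p" and t: "t \<ge> 0" and k: "k < d"
  shows "\<bar>2 * p t k * tanh (\<beta> * Mval d lam (p t)) * (lam k - Mval d lam (p t))\<bar>
          \<le> (4 * (\<Sum>l<d. \<bar>lam l\<bar>)) * p t k"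
proof -
  let ?L = "\<Sum>l<d. \<bar>lam l\<bar>"
  have pk: "p t k \<ge> 0" using sol_nonneg[OF s t k] .
  have a: "\<bar>lam k - Mval d lam (p t)\<bar> \<le> 2 * ?L"
    using lam_bound[OF k, of lam] M_bound[OF s t] by auto
  have "\<bar>2 * p t k * tanh (\<beta> * Mval d lam (p t)) * (lam k - Mval d lam (p t))\<bar>
      = 2 * p t k * (\<bar>tanh (\<beta> * Mval d lam (p t))\<bar> * \<bar>lam k - Mval d lam (p t)\<bar>)"
    using pk by (simp add: abs_mult)
  also have "\<dots> \<le> 2 * p t k * (1 * (2 * ?L))"
    using pk a tanh_abs_le1 by (intro mult_left_mono mult_mono) auto
  finally show ?thesis by (simp add: algebra_simps)
qed

lemma ratio_deriv:
  assumes s: "is_solution d \<beta> lam p" and t: "t \<ge> 0" and k: "k < d" and j: "j < d"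
    and pj: "p t j > 0"
  shows "((\<lambda>s. p s k / p s j) has_real_derivative
     (2 * tanh (\<beta> * Mval d lam (p t)) * (lam k - lam j) * (p t k / p t j))) (at t within {0..})"
proof -
  have "((\<lambda>s. p s k / p s j) has_real_derivative
     ((2 * p t k * tanh (\<beta> * Mval d lam (p t)) * (lam k - Mval d lam (p t))) * p t j
      - p t k * (2 * p t j * tanh (\<beta> * Mval d lam (p t)) * (lam j - Mval d lam (p t)))) / (p t j * p t j))
     (at t within {0..})"
    by (rule DERIV_divide[OF sol_deriv[OF s t k] sol_deriv[OF s t j]]) (use pj in auto)
  moreover have "((2 * p t k * tanh (\<beta> * Mval d lam (p t)) * (lam k - Mval d lam (p t))) * p t j
      - p t k * (2 * p t j * tanh (\<beta> * Mval d lam (p t)) * (lam j - Mval d lam (p t)))) / (p t j * p t j)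
     = 2 * tanh (\<beta> * Mval d lam (p t)) * (lam k - lam j) * (p t k / p t j)"
    using pj by (simp add: field_simps)
  ultimately show ?thesis by simp
qed


lemma case1:
  assumes b: "\<beta> > 0" and s: "is_solution d \<beta> lam p" and M0: "Mval d lam (p 0) > 0"
    and I0: "I0 = {k. k < d \<and> p 0 k > 0}" and lp: "lp = Max (lam ` I0)"
    and Ip: "Iplus = {k\<in>I0. lam k = lp}"
  shows "(\<forall>k<d. k \<notin> Iplus \<longrightarrow> ((\<lambda>t. p t k) \<longlongrightarrow> 0) at_top) \<and>
        (\<forall>k\<in>Iplus. ((\<lambda>t. p t k) \<longlongrightarrow> p 0 k / (\<Sum>j\<in>Iplus. p 0 j)) at_top) \<and>
        ((\<lambda>t. Mval d lam (p t)) \<longlongrightarrow> lp) at_top"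
proof -
  let ?L = "\<Sum>l<d. \<bar>lam l\<bar>"
  define M where "M t = Mval d lam (p t)" for t
  define V where "V t = (\<Sum>l<d. p t l * (lam l - M t)^2)" for t
  have MD: "(M has_real_derivative 2 * tanh (\<beta> * M t) * V t) (at t within {0..})" if "t \<ge> 0" for t
    using M_deriv[OF s that] unfolding M_def V_def by simp
  have V0: "V t \<ge> 0" if "t \<ge> 0" for t using V_bounds(1)[OF s that] unfolding V_def M_def by simp
  have finI0: "finite I0" unfolding I0 by auto
  have I0ne: "I0 \<noteq> {}"
  proof
    assume "I0 = {}"
    then have "\<forall>k<d. p 0 k = 0" using sol_nonneg[OF s, of 0] unfolding I0 by force
    then show False using sol_sum[OF s, of 0] by simp
  qed
  have I0d: "I0 \<subseteq> {..<d}" unfolding I0 by auto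
  have lpin: "lp \<in> lam ` I0" unfolding lp using finI0 I0ne by (intro Max_in) auto
  have lpge: "lam k \<le> lp" if "k \<in> I0" for k unfolding lp using finI0 that by (intro Max_ge) auto
  obtain j0 where j0: "j0 \<in> Iplus" using lpin unfolding Ip by auto
  have finIp: "finite Iplus" unfolding Ip using finI0 by auto
  have Ipd: "Iplus \<subseteq> {..<d}" using I0d unfolding Ip by auto
  have IpI0: "Iplus \<subseteq> I0" unfolding Ip by auto
  define S0 where "S0 = (\<Sum>j\<in>Iplus. p 0 j)"
  have S0pos: "S0 > 0" unfolding S0_def
    using finIp j0 IpI0 unfolding I0 by (intro sum_pos) auto

  have sq: "(M 0)^2 \<le> (M t)^2" if t: "t \<ge> 0" for t
  proof -
    have "(\<lambda>s. - ((M s)^2)) t \<le> (\<lambda>s. - ((M s)^2)) 0"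
    proof (rule nonpos_deriv_dec[where f'="\<lambda>t. - (2 * M t * (2 * tanh (\<beta> * M t) * V t))"])
      fix t :: real assume t: "t \<ge> 0"
      show "((\<lambda>s. - ((M s)^2)) has_real_derivative - (2 * M t * (2 * tanh (\<beta> * M t) * V t))) (at t within {0..})"
        using MD[OF t] by (auto intro!: derivative_eq_intros)
      have "M t * tanh (\<beta> * M t) \<ge> 0"
        using b by (cases "M t \<ge> 0") (auto intro: mult_nonpos_nonpos simp: mult_le_0_iff zero_le_mult_iff)
      then show "- (2 * M t * (2 * tanh (\<beta> * M t) * V t)) \<le> 0" using V0[OF t]
        by (metis (no_types, opaque_lifting) mult.assoc mult.left_commute mult_nonneg_nonneg neg_le_0_iff_le zero_le_numeral)
    qed (use t in auto)
    then show ?thesis by simp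
  qed
  have Mcont: "continuous_on {0..t} M" for t using cont_from_deriv[OF MD] .
  have Mpos: "M t > 0" if t: "t \<ge> 0" for t
  proof (rule ccontr)
    assume "\<not> M t > 0"
    then obtain x where x: "0 \<le> x" "x \<le> t" "M x = 0"
      using IVT2'[of M t 0 0, OF _ _ t Mcont] M0 unfolding M_def by auto
    then show False using sq[of x] M0 unfolding M_def by simp
  qed
  have Mge: "M t \<ge> M 0" if t: "t \<ge> 0" for t
  proof -
    have "(\<lambda>s. - M s) t \<le> (\<lambda>s. - M s) 0"
    proof (rule nonpos_deriv_dec[where f'="\<lambda>t. - (2 * tanh (\<beta> * M t) * V t)"])
      fix t :: real assume t: "t \<ge> 0"
      show "((\<lambda>s. - M s) has_real_derivative - (2 * tanh (\<beta> * M t) * V t)) (at t within {0..})"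
        using MD[OF t] by (auto intro!: derivative_eq_intros)
      show "- (2 * tanh (\<beta> * M t) * V t) \<le> 0" using V0[OF t] Mpos[OF t] b by simp
    qed (use t in auto)
    then show ?thesis by simp
  qed
  define c where "c = tanh (\<beta> * M 0)"
  have cpos: "c > 0" unfolding c_def using b M0 unfolding M_def by simp
  have gc: "tanh (\<beta> * M t) \<ge> c" if "t \<ge> 0" for t
    unfolding c_def using Mge[OF that] b by simp

  have zero: "p t k = 0" if k: "k < d" and pk0: "p 0 k = 0" and t: "t \<ge> 0" for k t
  proof -
    have "(\<lambda>s. p s k) t \<le> (\<lambda>s. p s k) 0 * exp ((4 * ?L) * t)"
    proof (rule gronwall_up[OF sol_deriv[OF s _ k]])
      fix t :: real assume t: "t \<ge> 0"
      show "2 * p t k * tanh (\<beta> * Mval d lam (p t)) * (lam k - Mval d lam (p t)) \<le> 4 * ?L * p t k"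
        using rate_bound[OF s t k] by linarith
    qed (use t in auto)
    then show ?thesis using pk0 sol_nonneg[OF s t k] by simp
  qed
  have ppos: "p t j > 0" if j: "j \<in> I0" and t: "t \<ge> 0" for j t
  proof -
    have jd: "j < d" using j I0d by auto
    have "(\<lambda>s. - p s j) t \<le> (\<lambda>s. - p s j) 0 * exp ((- 4 * ?L) * t)"
    proof (rule gronwall_up[where u'="\<lambda>t. - (2 * p t j * tanh (\<beta> * Mval d lam (p t)) * (lam j - Mval d lam (p t)))"])
      fix t :: real assume t: "t \<ge> 0"
      show "((\<lambda>s. - p s j) has_real_derivative - (2 * p t j * tanh (\<beta> * Mval d lam (p t)) * (lam j - Mval d lam (p t)))) (at t within {0..})"
        using sol_deriv[OF s t jd] by (auto intro!: derivative_eq_intros)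
      show "- (2 * p t j * tanh (\<beta> * Mval d lam (p t)) * (lam j - Mval d lam (p t))) \<le> (- 4 * ?L) * (- p t j)"
        using rate_bound[OF s t jd] by linarith
    qed (use t in auto)
    then have "p 0 j * exp ((- 4 * ?L) * t) \<le> p t j" by simp
    moreover have "p 0 j * exp ((- 4 * ?L) * t) > 0" using j unfolding I0 by simp
    ultimately show ?thesis by linarith
  qed

  have notIp: "((\<lambda>t. p t k) \<longlongrightarrow> 0) at_top" if k: "k < d" "k \<notin> Iplus" for k
  proof (cases "k \<in> I0")
    case False
    then have "p 0 k = 0" using sol_nonneg[OF s, of 0 k] k unfolding I0 by auto
    then have "eventually (\<lambda>t. p t k = 0) at_top"
      using zero[OF k(1)] by (intro eventually_mono[OF eventually_ge_at_top[of "0::real"]]) simp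
    then show ?thesis by (simp add: tendsto_eventually)
  next
    case True
    have lt: "lam k < lp" using lpge[OF True] k True unfolding Ip by auto
    have j0d: "j0 < d" and j0I: "j0 \<in> I0" and lj0: "lam j0 = lp" using j0 Ipd IpI0 unfolding Ip by auto
    define r where "r t = p t k / p t j0" for t
    have rb: "r t \<le> r 0 * exp ((2 * c * (lam k - lp)) * t)" if t: "t \<ge> 0" for t
    proof (rule gronwall_up[where u'="\<lambda>t. 2 * tanh (\<beta> * M t) * (lam k - lam j0) * r t", OF _ _ t])
      fix t :: real assume t: "t \<ge> 0"
      show "(r has_real_derivative 2 * tanh (\<beta> * M t) * (lam k - lam j0) * r t) (at t within {0..})"
        unfolding r_def M_def by (rule ratio_deriv[OF s t k(1) j0d ppos[OF j0I t]])
      have r0: "r t \<ge> 0" unfolding r_def using sol_nonneg[OF s t k(1)] ppos[OF j0I t] by simp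
      have "(tanh (\<beta> * M t) - c) * ((lam k - lp) * r t) \<le> 0"
        using gc[OF t] lt r0 by (intro mult_nonneg_nonpos mult_nonpos_nonneg) auto
      then show "2 * tanh (\<beta> * M t) * (lam k - lam j0) * r t \<le> 2 * c * (lam k - lp) * r t"
        unfolding lj0 by (simp add: algebra_simps)
    qed
    have le: "p t k \<le> r 0 * exp ((2 * c * (lam k - lp)) * t)" if t: "t \<ge> 0" for t
    proof -
      have "p t k = r t * p t j0" unfolding r_def using ppos[OF j0I t] by simp
      also have "\<dots> \<le> r t * 1"
        using sol_le1[OF s t j0d] sol_nonneg[OF s t k(1)] ppos[OF j0I t] unfolding r_def
        by (intro mult_left_mono) auto
      finally show ?thesis using rb[OF t] by simp
    qed
    have lim: "((\<lambda>t. r 0 * exp ((2 * c * (lam k - lp)) * t)) \<longlongrightarrow> 0) at_top"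
      by (rule exp_neg_lim) (use cpos lt in \<open>simp add: mult_pos_neg\<close>)
    show ?thesis
    proof (rule tendsto_sandwich[OF _ _ tendsto_const lim])
      show "eventually (\<lambda>t. 0 \<le> p t k) at_top"
        using sol_nonneg[OF s _ k(1)] by (intro eventually_mono[OF eventually_ge_at_top[of "0::real"]]) simp
      show "eventually (\<lambda>t. p t k \<le> r 0 * exp ((2 * c * (lam k - lp)) * t)) at_top"
        using le by (intro eventually_mono[OF eventually_ge_at_top[of "0::real"]]) simp
    qed
  qed

  define R where "R t = (\<Sum>l\<in>{..<d} - Iplus. p t l)" for t
  have Rlim: "(R \<longlongrightarrow> 0) at_top" unfolding R_def
    by (rule tendsto_null_sum) (use notIp in auto)
  have inIp: "((\<lambda>t. p t k) \<longlongrightarrow> p 0 k / S0) at_top" if k: "k \<in> Iplus" for k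
  proof -
    have kI: "k \<in> I0" "k < d" and lk: "lam k = lp" using k IpI0 Ipd unfolding Ip by auto
    have eq: "p t k = p 0 k * (1 - R t) / S0" if t: "t \<ge> 0" for t
    proof -
      have rel: "p t j = p t k * (p 0 j / p 0 k)" if j: "j \<in> Iplus" for j
      proof -
        have jd: "j < d" and lj: "lam j = lp" using j Ipd unfolding Ip by auto
        have "(\<lambda>s. p s j / p s k) t = (\<lambda>s. p s j / p s k) 0"
        proof (rule const_from_zero_deriv[OF _ t])
          fix s :: real assume s0: "s \<ge> 0"
          show "((\<lambda>s. p s j / p s k) has_real_derivative 0) (at s within {0..})"
            using ratio_deriv[OF s s0 jd kI(2) ppos[OF kI(1) s0]] lj lk by simp
        qed
        then show ?thesis using ppos[OF kI(1) t] ppos[OF kI(1), of 0] by (simp add: field_simps)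
      qed
      have "(\<Sum>l<d. p t l) = (\<Sum>l\<in>Iplus. p t l) + R t"
        unfolding R_def using Ipd by (metis add.commute finite_lessThan sum.subset_diff)
      then have "(\<Sum>l\<in>Iplus. p t l) = 1 - R t" using sol_sum[OF s t] by simp
      moreover have "(\<Sum>l\<in>Iplus. p t l) = p t k / p 0 k * S0"
        unfolding S0_def using rel by (simp add: sum_distrib_left)
      ultimately have "p t k / p 0 k * S0 = 1 - R t" by simp
      then show ?thesis using S0pos ppos[OF kI(1), of 0] by (simp add: field_simps)
    qed
    have "((\<lambda>t. p 0 k * (1 - R t) / S0) \<longlongrightarrow> p 0 k * (1 - 0) / S0) at_top"
      by (rule tendsto_divide[OF tendsto_mult[OF tendsto_const tendsto_diff[OF tendsto_const Rlim]] tendsto_const])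
         (use S0pos in auto)
    then have "((\<lambda>t. p 0 k * (1 - R t) / S0) \<longlongrightarrow> p 0 k / S0) at_top"
      unfolding diff_zero mult_1_right .
    moreover have "eventually (\<lambda>t. p 0 k * (1 - R t) / S0 = p t k) at_top"
      by (intro eventually_mono[OF eventually_ge_at_top[of "0::real"]]) (erule eq[symmetric])
    ultimately show ?thesis by (rule Lim_transform_eventually)
  qed

  define Lm where "Lm l = (if l \<in> Iplus then p 0 l / S0 else 0)" for l
  have "((\<lambda>t. \<Sum>l<d. lam l * p t l) \<longlongrightarrow> (\<Sum>l<d. lam l * Lm l)) at_top"
  proof (intro tendsto_sum tendsto_mult tendsto_const)
    fix l assume "l \<in> {..<d}"
    then show "((\<lambda>t. p t l) \<longlongrightarrow> Lm l) at_top"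
      unfolding Lm_def using inIp notIp by auto
  qed
  moreover have "(\<Sum>l<d. lam l * Lm l) = lp"
  proof -
    have "(\<Sum>l<d. lam l * Lm l) = (\<Sum>l\<in>Iplus. lam l * Lm l)"
      by (rule sum.mono_neutral_right) (use Ipd in \<open>auto simp: Lm_def\<close>)
    also have "\<dots> = (\<Sum>l\<in>Iplus. lp * (p 0 l / S0))"
      by (rule sum.cong) (auto simp: Lm_def Ip)
    also have "\<dots> = lp * ((\<Sum>l\<in>Iplus. p 0 l) / S0)"
      by (simp add: sum_distrib_left sum_divide_distrib)
    also have "\<dots> = lp * (S0 / S0)" unfolding S0_def by (rule refl)
    finally show ?thesis using S0pos by simp
  qed
  ultimately have "((\<lambda>t. Mval d lam (p t)) \<longlongrightarrow> lp) at_top" unfolding Mval_def by simp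
  then show ?thesis using notIp inIp unfolding S0_def by auto
qed


theorem proposition4p5:
  fixes d :: nat and \<beta> :: real and lam :: "nat \<Rightarrow> real" and p :: "real \<Rightarrow> nat \<Rightarrow> real"
  assumes "\<beta> > 0"
    and sol: "is_solution d \<beta> lam p"
  defines "I0 \<equiv> {k. k < d \<and> p 0 k > 0}"
  defines "lp \<equiv> Max (lam ` I0)" and "lm \<equiv> Min (lam ` I0)"
  defines "Iplus \<equiv> {k\<in>I0. lam k = lp}" and "Iminus \<equiv> {k\<in>I0. lam k = lm}"
  shows
    "(Mval d lam (p 0) > 0 \<longrightarrow>
        (\<forall>k<d. k \<notin> Iplus \<longrightarrow> ((\<lambda>t. p t k) \<longlongrightarrow> 0) at_top) \<and>
        (\<forall>k\<in>Iplus. ((\<lambda>t. p t k) \<longlongrightarrow> p 0 k / (\<Sum>j\<in>Iplus. p 0 j)) at_top) \<and>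
        ((\<lambda>t. Mval d lam (p t)) \<longlongrightarrow> lp) at_top)
   \<and> (Mval d lam (p 0) < 0 \<longrightarrow>
        (\<forall>k<d. k \<notin> Iminus \<longrightarrow> ((\<lambda>t. p t k) \<longlongrightarrow> 0) at_top) \<and>
        (\<forall>k\<in>Iminus. ((\<lambda>t. p t k) \<longlongrightarrow> p 0 k / (\<Sum>j\<in>Iminus. p 0 j)) at_top) \<and>
        ((\<lambda>t. Mval d lam (p t)) \<longlongrightarrow> lm) at_top)
   \<and> (Mval d lam (p 0) = 0 \<longrightarrow> (\<forall>t\<ge>0. \<forall>k<d. p t k = p 0 k))"
proof (rule conjI[OF impI conjI[OF impI impI]])
  have I0e: "I0 = {k. k < d \<and> p 0 k > 0}" by (simp add: I0_def)
  assume "Mval d lam (p 0) > 0"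
  from case1[OF \<open>\<beta> > 0\<close> sol this I0e, of lp Iplus]
  show "(\<forall>k<d. k \<notin> Iplus \<longrightarrow> ((\<lambda>t. p t k) \<longlongrightarrow> 0) at_top) \<and>
        (\<forall>k\<in>Iplus. ((\<lambda>t. p t k) \<longlongrightarrow> p 0 k / (\<Sum>j\<in>Iplus. p 0 j)) at_top) \<and>
        ((\<lambda>t. Mval d lam (p t)) \<longlongrightarrow> lp) at_top"
    by (simp add: lp_def Iplus_def)
next
  have I0e: "I0 = {k. k < d \<and> p 0 k > 0}" by (simp add: I0_def)
  assume neg: "Mval d lam (p 0) < 0"
  have Mn: "Mval d (\<lambda>k. - lam k) q = - Mval d lam q" for q
    unfolding Mval_def by (simp add: sum_negf)
  have finI0: "finite I0" unfolding I0e by auto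
  have I0ne: "I0 \<noteq> {}"
  proof
    assume "I0 = {}"
    then have "\<forall>k<d. p 0 k = 0" using sol_nonneg[OF sol, of 0] unfolding I0e by force
    then show False using sol_sum[OF sol, of 0] by simp
  qed
  have lpn: "Max ((\<lambda>k. - lam k) ` I0) = - lm" unfolding lm_def by (rule Max_neg[OF finI0 I0ne])
  have Ie: "{k\<in>I0. - lam k = - lm} = Iminus" unfolding Iminus_def by auto
  have "Mval d (\<lambda>k. - lam k) (p 0) > 0" using neg Mn by simp
  from case1[OF \<open>\<beta> > 0\<close> neg_solution[OF sol] this I0e lpn[symmetric] refl]
  have R: "(\<forall>k<d. k \<notin> Iminus \<longrightarrow> ((\<lambda>t. p t k) \<longlongrightarrow> 0) at_top) \<and>
        (\<forall>k\<in>Iminus. ((\<lambda>t. p t k) \<longlongrightarrow> p 0 k / (\<Sum>j\<in>Iminus. p 0 j)) at_top) \<and>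
        ((\<lambda>t. - Mval d lam (p t)) \<longlongrightarrow> - lm) at_top"
    unfolding Ie Mn .
  then have "((\<lambda>t. Mval d lam (p t)) \<longlongrightarrow> lm) at_top"
    using tendsto_minus[of "\<lambda>t. - Mval d lam (p t)" "- lm" at_top] by simp
  with R show "(\<forall>k<d. k \<notin> Iminus \<longrightarrow> ((\<lambda>t. p t k) \<longlongrightarrow> 0) at_top) \<and>
        (\<forall>k\<in>Iminus. ((\<lambda>t. p t k) \<longlongrightarrow> p 0 k / (\<Sum>j\<in>Iminus. p 0 j)) at_top) \<and>
        ((\<lambda>t. Mval d lam (p t)) \<longlongrightarrow> lm) at_top" by blast
next
  assume "Mval d lam (p 0) = 0"
  from case3[OF \<open>\<beta> > 0\<close> sol this] show "\<forall>t\<ge>0. \<forall>k<d. p t k = p 0 k" .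
qed

end
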